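(* Let $\mathsf{R}$ be a commutative ring, $n\ge 1$, $D$, $m$ positive integers, $0<\mu<1$, and $\ell\ge 1$. If a finite set $A \subseteq \mathsf{R}$ is an $(n,D,m,\mu)$-diversifying set, then $A^\ell \subseteq \mathsf{R}^\ell$ is an $(n,D,m,\mu^\ell)$-diversifying set, where addition and multiplication in $\mathsf{R}^\ell$ are componentwise (so a polynomial $h\in\mathsf{R}[x_1,\ldots,x_n]$ evaluated at $\boldsymbol\beta=(\boldsymbol\alpha_1,\ldots,\boldsymbol\alpha_\ell)$, with $\boldsymbol\alpha_k\in A^n$, gives $h(\boldsymbol\beta) = (h(\boldsymbol\alpha_1),\ldots,h(\boldsymbol\alpha_\ell))\in\mathsf{R}^\ell$, which is nonzero iff some component is nonzero).
   Context: Definition (diversifying set): For $n\ge 1$, bounds $D,m$ and $0<\mu<1$, a finite set $A$ of evaluation values is an $(n,D,m,\mu)$-diversifying set if for every set $\mathcal{H}\subseteq\mathsf{R}[x_1,\ldots,x_n]$ of nonzero polynomials with $\#\mathcal{H}\le m$ and each $h\in\mathcal{H}$ having max degree less than $D$ (every variable appears with exponent less than $D$), we have $\Pr_{\boldsymbol\alpha\in A^n}[h(\boldsymbol\alpha)\ne 0 \text{ for all } h\in\mathcal{H}] \ge 1-\mu$, where $\boldsymbol\alpha$ is chosen uniformly at random from $A^n$. *)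

theory Defs
  imports Complex_Main "HOL-Library.Poly_Mapping" "HOL-Library.FuncSet"
begin

text \<open>Variables x_1..x_n are indexed 0..n-1.\<close>

type_synonym 'a mpoly = "(nat \<Rightarrow>\<^sub>0 nat) \<Rightarrow>\<^sub>0 'a"

definition mpoly_in_vars :: "nat \<Rightarrow> ('a::zero) mpoly \<Rightarrow> bool" where
  "mpoly_in_vars n h \<longleftrightarrow> (\<forall>mo \<in> Poly_Mapping.keys h. Poly_Mapping.keys mo \<subseteq> {..<n})"

definition max_deg_lt :: "nat \<Rightarrow> ('a::zero) mpoly \<Rightarrow> bool" where
  "max_deg_lt D h \<longleftrightarrow> (\<forall>mo \<in> Poly_Mapping.keys h. \<forall>i. Poly_Mapping.lookup mo i < D)"

definition mpoly_eval :: "('a::comm_ring_1) mpoly \<Rightarrow> (nat \<Rightarrow> 'a) \<Rightarrow> 'a" where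
  "mpoly_eval h x = (\<Sum>mo \<in> Poly_Mapping.keys h. Poly_Mapping.lookup h mo * (\<Prod>i \<in> Poly_Mapping.keys mo. x i ^ Poly_Mapping.lookup mo i))"

definition admissible_family :: "nat \<Rightarrow> nat \<Rightarrow> nat \<Rightarrow> ('a::comm_ring_1) mpoly set \<Rightarrow> bool" where
  "admissible_family n D m H \<longleftrightarrow> finite H \<and> card H \<le> m \<and>
     (\<forall>h \<in> H. h \<noteq> 0 \<and> mpoly_in_vars n h \<and> max_deg_lt D h)"

text \<open>(n,D,m,mu)-diversifying set; probability = uniform over A^n (points
  of A^n as extensional functions on {..<n}).\<close>
definition diversifying :: "nat \<Rightarrow> nat \<Rightarrow> nat \<Rightarrow> real \<Rightarrow> 'a::comm_ring_1 set \<Rightarrow> bool" where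
  "diversifying n D m \<mu> A \<longleftrightarrow> finite A \<and>
     (\<forall>H. admissible_family n D m H \<longrightarrow>
        real (card {\<alpha> \<in> PiE {..<n} (\<lambda>_. A). \<forall>h \<in> H. mpoly_eval h \<alpha> \<noteq> 0})
          / real (card (PiE {..<n} (\<lambda>_. A))) \<ge> 1 - \<mu>)"

text \<open>A^l \<subseteq> R^l is (n,D,m,mu)-diversifying, with polynomials h \<in> R[x] evaluated
  componentwise at beta = (alpha_1,..,alpha_l), alpha_k \<in> A^n; h(beta) \<noteq> 0 iff some
  component h(alpha_k) \<noteq> 0. beta is uniform over (A^n)^l.\<close>
definition diversifying_pow :: "nat \<Rightarrow> nat \<Rightarrow> nat \<Rightarrow> nat \<Rightarrow> real \<Rightarrow> 'a::comm_ring_1 set \<Rightarrow> bool" where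
  "diversifying_pow l n D m \<mu> A \<longleftrightarrow> finite A \<and>
     (\<forall>H. admissible_family n D m H \<longrightarrow>
        real (card {\<beta> \<in> PiE {..<l} (\<lambda>_. PiE {..<n} (\<lambda>_. A)).
                      \<forall>h \<in> H. \<exists>k<l. mpoly_eval h (\<beta> k) \<noteq> 0})
          / real (card (PiE {..<l} (\<lambda>_. PiE {..<n} (\<lambda>_. A)))) \<ge> 1 - \<mu>)"

end

theory Submission
  imports Defs
begin

theorem lemma4p5:
  fixes A :: "'a::comm_ring_1 set" and n D m l :: nat and \<mu> :: real
  assumes "n \<ge> 1" and "D > 0" and "m > 0" and "0 < \<mu>" and "\<mu> < 1" and "l \<ge> 1"
    and "diversifying n D m \<mu> A"
  shows "diversifying_pow l n D m (\<mu> ^ l) A"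
proof -
  define P where "P = PiE {..<n} (\<lambda>_. A)"
  have finA: "finite A" using assms(7) unfolding diversifying_def by auto
  have finP: "finite P" unfolding P_def using finA by (simp add: finite_PiE)
  have div: "\<And>H. admissible_family n D m H \<Longrightarrow>
     real (card {\<alpha> \<in> P. \<forall>h \<in> H. mpoly_eval h \<alpha> \<noteq> 0}) / real (card P) \<ge> 1 - \<mu>"
    using assms(7) unfolding diversifying_def P_def by blast
  have cardP: "card P > 0"
  proof (rule ccontr)
    assume "\<not> card P > 0"
    hence "card P = 0" by simp
    moreover have "admissible_family n D m ({}::'a mpoly set)"
      unfolding admissible_family_def by simp
    ultimately show False using div[of "{}"] assms(5) by simp
  qed
  show ?thesis
    unfolding diversifying_pow_def
  proof (intro conjI allI impI finA)
    fix H :: "'a mpoly set"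
    assume adm: "admissible_family n D m H"
    define B where "B = {\<alpha> \<in> P. \<exists>h\<in>H. mpoly_eval h \<alpha> = 0}"
    define Q where "Q = PiE {..<l} (\<lambda>_. P)"
    define G where "G = {\<beta> \<in> Q. \<forall>h \<in> H. \<exists>k<l. mpoly_eval h (\<beta> k) \<noteq> 0}"
    have "{\<alpha> \<in> P. \<forall>h \<in> H. mpoly_eval h \<alpha> \<noteq> 0} = P - B" unfolding B_def by auto
    moreover have "B \<subseteq> P" unfolding B_def by auto
    ultimately have "card {\<alpha> \<in> P. \<forall>h \<in> H. mpoly_eval h \<alpha> \<noteq> 0} = card P - card B"
      using finP by (simp add: card_Diff_subset finite_subset)
    moreover have cBP: "card B \<le> card P" using \<open>B \<subseteq> P\<close> finP card_mono by blast
    ultimately have "real (card P - card B) / real (card P) \<ge> 1 - \<mu>" using div[OF adm] by simp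
    hence "real (card P) - real (card B) \<ge> (1 - \<mu>) * real (card P)"
      using cardP cBP by (simp add: of_nat_diff pos_le_divide_eq)
    hence cB: "real (card B) \<le> \<mu> * real (card P)" by (simp add: algebra_simps)
    have finQ: "finite Q" unfolding Q_def using finP by (simp add: finite_PiE)
    have cQ: "card Q = card P ^ l" unfolding Q_def by (simp add: card_PiE finP)
    have sub: "Q - G \<subseteq> PiE {..<l} (\<lambda>_. B)"
    proof
      fix \<beta> assume "\<beta> \<in> Q - G"
      then obtain h where h: "h \<in> H" "\<forall>k<l. mpoly_eval h (\<beta> k) = 0" and bQ: "\<beta> \<in> Q"
        unfolding G_def by auto
      show "\<beta> \<in> PiE {..<l} (\<lambda>_. B)"
        using bQ h unfolding Q_def B_def by (auto simp: PiE_iff)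
    qed
    have finB: "finite B" using \<open>B \<subseteq> P\<close> finP finite_subset by blast
    have "card (Q - G) \<le> card (PiE {..<l} (\<lambda>_. B))"
      by (rule card_mono[OF _ sub]) (simp add: finite_PiE finB)
    also have "\<dots> = card B ^ l" by (simp add: card_PiE finB)
    finally have "real (card (Q - G)) \<le> real (card B) ^ l"
      by (metis of_nat_le_iff of_nat_power)
    also have "\<dots> \<le> (\<mu> * real (card P)) ^ l" by (rule power_mono[OF cB]) simp
    finally have bad: "real (card (Q - G)) \<le> \<mu> ^ l * real (card Q)"
      by (simp add: cQ power_mult_distrib)
    have GQ: "G \<subseteq> Q" unfolding G_def by auto
    have "card G = card Q - card (Q - G)"
      using GQ finQ by (metis card_Diff_subset double_diff finite_subset order_refl Diff_subset)
    moreover have "card (Q - G) \<le> card Q" using finQ by (simp add: card_mono)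
    ultimately have "real (card G) = real (card Q) - real (card (Q - G))" by (simp add: of_nat_diff)
    hence gg: "real (card G) \<ge> (1 - \<mu> ^ l) * real (card Q)" using bad by (simp add: algebra_simps)
    have "card Q > 0" using cQ cardP by simp
    hence "(1 - \<mu> ^ l) \<le> real (card G) / real (card Q)" using gg by (simp add: pos_le_divide_eq)
    thus "1 - \<mu> ^ l \<le> real (card {\<beta> \<in> PiE {..<l} (\<lambda>_. PiE {..<n} (\<lambda>_. A)).
                      \<forall>h \<in> H. \<exists>k<l. mpoly_eval h (\<beta> k) \<noteq> 0})
          / real (card (PiE {..<l} (\<lambda>_. PiE {..<n} (\<lambda>_. A))))"
      unfolding G_def Q_def P_def .
  qed
qed

end
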